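(* Let $(X,\mathcal{B})$ be an $\mathrm{SQS}(v)$ and let $B = \{x_1,x_2,x_3,x_4\} \in \mathcal{B}$. Let $p$ be the probability that a block is available and $q = 1-p$. Then \[\mathcal{R}(p) = 1 - 4q^{r_1-1} + 6q^{2r_1-r_2-1} - 4q^{3r_1-3r_2} + q^{4r_1-6r_2+2},\] where $r_1 = \binom{v-1}{2}/3$ and $r_2 = \binom{v-2}{1}/2$.
   Context: A Steiner quadruple system $\mathrm{SQS}(v)$ is a $3$-$(v,4,1)$-design: a set $X$ of $v$ points with a collection $\mathcal{B}$ of $4$-subsets (blocks) such that every $3$-subset of $X$ lies in exactly one block; $r_1$ is the number of blocks containing a given point and $r_2$ the number containing a given pair of points. Reliability model: fix a block $B\in\mathcal{B}$. A repair set for $B$ is a subset $\mathcal{P}\subseteq \mathcal{B}\setminus\{B\}$ with $B \subseteq \bigcup_{B'\in\mathcal{P}} B'$. Each block of $\mathcal{B}\setminus\{B\}$ is, independently of the others, available with probability $p\in[0,1]$; a repair set is available if all of its blocks are available. $\mathcal{R}(p)$ is the probability that at least one available repair set for $B$ exists. *)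

theory Defs
  imports Complex_Main
begin

definition SQS :: "nat \<Rightarrow> 'a set \<Rightarrow> 'a set set \<Rightarrow> bool" where
  "SQS v X Bs \<longleftrightarrow> finite X \<and> card X = v \<and>
     (\<forall>B\<in>Bs. B \<subseteq> X \<and> card B = 4) \<and>
     (\<forall>T. T \<subseteq> X \<and> card T = 3 \<longrightarrow> (\<exists>!B. B \<in> Bs \<and> T \<subseteq> B))"

definition repair_set :: "'a set set \<Rightarrow> 'a set \<Rightarrow> 'a set set \<Rightarrow> bool" where
  "repair_set Bs B P \<longleftrightarrow> P \<subseteq> Bs - {B} \<and> B \<subseteq> \<Union>P"

text \<open>Reliability: each block of Bs - {B} is independently available with
  probability p; R is the probability that the set A of available blocks contains
  some repair set for B (sum over all outcomes A of the product measure).\<close>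
definition reliability :: "'a set set \<Rightarrow> 'a set \<Rightarrow> real \<Rightarrow> real" where
  "reliability Bs B p =
     (\<Sum>A\<in>Pow (Bs - {B}).
        (if \<exists>P. P \<subseteq> A \<and> repair_set Bs B P
         then p ^ card A * (1 - p) ^ card ((Bs - {B}) - A) else 0))"

end

theory Submission
  imports Defs
begin


lemma key1:
  fixes p :: real
  assumes "finite D" "E \<subseteq> D"
  shows "(\<Sum>A\<in>Pow D. p ^ card A * (1-p) ^ card (D-A) * (if A \<inter> E = {} then 1 else 0))
         = (1-p) ^ card E"
proof -
  have "(\<Prod>C\<in>D. (if C \<in> E then 0 else p) + (1-p)) =
    (\<Sum>A\<in>Pow D. (\<Prod>C\<in>A. (if C \<in> E then 0 else p)) * (\<Prod>C\<in>D-A. (1-p)))"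
    by (rule prod_add[OF assms(1)])
  also have "\<dots> = (\<Sum>A\<in>Pow D. p ^ card A * (1-p) ^ card (D-A) * (if A \<inter> E = {} then 1 else 0))"
  proof (rule sum.cong[OF refl])
    fix A assume A: "A \<in> Pow D"
    hence fA: "finite A" using assms(1) finite_subset by auto
    have "(\<Prod>C\<in>A. (if C \<in> E then 0 else p)) = (if A \<inter> E = {} then p ^ card A else 0)"
    proof (cases "A \<inter> E = {}")
      case True
      hence "(\<Prod>C\<in>A. (if C \<in> E then 0 else p)) = (\<Prod>C\<in>A. p)"
        by (intro prod.cong) auto
      thus ?thesis using True by simp
    next
      case False
      then obtain c where "c \<in> A" "c \<in> E" by auto
      thus ?thesis using fA False by (auto intro!: prod_zero)
    qed
    thus "(\<Prod>C\<in>A. (if C \<in> E then 0 else p)) * (\<Prod>C\<in>D-A. (1-p)) =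
       p ^ card A * (1-p) ^ card (D-A) * (if A \<inter> E = {} then 1 else 0)" by simp
  qed
  finally have 1: "(\<Sum>A\<in>Pow D. p ^ card A * (1-p) ^ card (D-A) * (if A \<inter> E = {} then 1 else 0))
     = (\<Prod>C\<in>D. (if C \<in> E then 0 else p) + (1-p))" by simp
  have "(\<Prod>C\<in>D. (if C \<in> E then 0 else p) + (1-p)) = (\<Prod>C\<in>D. (if C \<in> E then 1-p else 1))"
    by (intro prod.cong) auto
  also have "\<dots> = (\<Prod>C\<in>E. 1-p)"
    using prod.inter_filter[OF assms(1), of "\<lambda>_. 1-p" "\<lambda>C. C \<in> E"] assms(2)
    by (simp add: prod.If_cases[OF assms(1)] Int_absorb1)
  finally show ?thesis using 1 by simp
qed



lemma sqs_basic:
  assumes "SQS v X Bs"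
  shows "finite X" "card X = v" "\<And>C. C \<in> Bs \<Longrightarrow> C \<subseteq> X \<and> card C = 4"
    "\<And>T. T \<subseteq> X \<Longrightarrow> card T = 3 \<Longrightarrow> \<exists>!C. C \<in> Bs \<and> T \<subseteq> C"
    "finite Bs"
proof -
  show "finite X" "card X = v" "\<And>C. C \<in> Bs \<Longrightarrow> C \<subseteq> X \<and> card C = 4"
    "\<And>T. T \<subseteq> X \<Longrightarrow> card T = 3 \<Longrightarrow> \<exists>!C. C \<in> Bs \<and> T \<subseteq> C"
    using assms unfolding SQS_def by auto
  have "Bs \<subseteq> Pow X" using assms unfolding SQS_def by auto
  thus "finite Bs" using \<open>finite X\<close> finite_subset by blast
qed

lemma sqs_uniq:
  assumes "SQS v X Bs" "T \<subseteq> X" "card T = 3" "C1 \<in> Bs" "C2 \<in> Bs" "T \<subseteq> C1" "T \<subseteq> C2"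
  shows "C1 = C2"
  using sqs_basic(4)[OF assms(1,2,3)] assms by blast

lemma r2_count:
  assumes S: "SQS v X Bs" and xy: "x \<in> X" "y \<in> X" "x \<noteq> y"
  shows "2 * card {C\<in>Bs. x \<in> C \<and> y \<in> C} = v - 2"
proof -
  note b = sqs_basic[OF S]
  let ?T = "{C\<in>Bs. x \<in> C \<and> y \<in> C}"
  have fT: "finite ?T" using b(5) by auto
  have eq: "X - {x,y} = (\<Union>C\<in>?T. C - {x,y})"
  proof
    show "X - {x,y} \<subseteq> (\<Union>C\<in>?T. C - {x,y})"
    proof
      fix z assume z: "z \<in> X - {x,y}"
      have "{x,y,z} \<subseteq> X" "card {x,y,z} = 3" using z xy by auto
      then obtain C where "C \<in> Bs" "{x,y,z} \<subseteq> C" using b(4) ex1_implies_ex by metis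
      thus "z \<in> (\<Union>C\<in>?T. C - {x,y})" using z by auto
    qed
  next
    show "(\<Union>C\<in>?T. C - {x,y}) \<subseteq> X - {x,y}"
    proof
      fix z assume "z \<in> (\<Union>C\<in>?T. C - {x,y})"
      then obtain C where "C \<in> Bs" "z \<in> C" "z \<notin> {x,y}" by auto
      thus "z \<in> X - {x,y}" using b(3) by blast
    qed
  qed
  have "card (\<Union>C\<in>?T. C - {x,y}) = (\<Sum>C\<in>?T. card (C - {x,y}))"
  proof (rule card_UN_disjoint[OF fT])
    show "\<forall>C\<in>?T. finite (C - {x,y})"
    proof
      fix C assume "C \<in> ?T"
      hence "C \<subseteq> X" using b(3) by blast
      thus "finite (C - {x,y})" using b(1) finite_subset by blast
    qed
    show "\<forall>C1\<in>?T. \<forall>C2\<in>?T. C1 \<noteq> C2 \<longrightarrow> (C1 - {x,y}) \<inter> (C2 - {x,y}) = {}"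
    proof (intro ballI impI)
      fix C1 C2 assume c: "C1 \<in> ?T" "C2 \<in> ?T" "C1 \<noteq> C2"
      show "(C1 - {x,y}) \<inter> (C2 - {x,y}) = {}"
      proof (rule ccontr)
        assume "(C1 - {x,y}) \<inter> (C2 - {x,y}) \<noteq> {}"
        then obtain z where z: "z \<in> C1" "z \<in> C2" "z \<noteq> x" "z \<noteq> y" by auto
        have "z \<in> X" using z c b(3) by blast
        hence "{x,y,z} \<subseteq> X" "card {x,y,z} = 3" using z xy by auto
        moreover have "{x,y,z} \<subseteq> C1" "{x,y,z} \<subseteq> C2" using c z by auto
        ultimately have "C1 = C2" using sqs_uniq[OF S, of "{x,y,z}" C1 C2] c by blast
        thus False using c by simp
      qed
    qed
  qed
  also have "\<dots> = (\<Sum>C\<in>?T. 2)"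
  proof (rule sum.cong[OF refl])
    fix C assume c: "C \<in> ?T"
    have cc: "C \<subseteq> X" "card C = 4" using c b(3) by auto
    have "finite C" "card C = 4" using cc b(1) finite_subset by auto
    thus "card (C - {x,y}) = 2" using c xy by (simp add: card_Diff_subset)
  qed
  finally have "card (X - {x,y}) = 2 * card ?T" using eq by simp
  moreover have "card (X - {x,y}) = v - 2" using xy b(1,2) by (simp add: card_Diff_subset)
  ultimately show ?thesis by simp
qed

lemma r1_count:
  assumes S: "SQS v X Bs" and x: "x \<in> X"
  shows "3 * card {C\<in>Bs. x \<in> C} = (v - 1) choose 2"
proof -
  note b = sqs_basic[OF S]
  let ?T = "{C\<in>Bs. x \<in> C}"
  let ?P = "\<lambda>Y. {S. S \<subseteq> Y \<and> card S = 2}"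
  have fT: "finite ?T" using b(5) by auto
  have eq: "?P (X - {x}) = (\<Union>C\<in>?T. ?P (C - {x}))"
  proof
    show "?P (X - {x}) \<subseteq> (\<Union>C\<in>?T. ?P (C - {x}))"
    proof
      fix S assume s: "S \<in> ?P (X - {x})"
      have fS: "finite S" using s by (auto intro: card_ge_0_finite)
      have xS: "x \<notin> S" using s by auto
      have "insert x S \<subseteq> X" "card (insert x S) = 3" using s x fS xS by auto
      then obtain C where "C \<in> Bs" "insert x S \<subseteq> C" using b(4) by blast
      thus "S \<in> (\<Union>C\<in>?T. ?P (C - {x}))" using s by auto
    qed
  next
    show "(\<Union>C\<in>?T. ?P (C - {x})) \<subseteq> ?P (X - {x})" using b(3) by blast
  qed
  have "card (\<Union>C\<in>?T. ?P (C - {x})) = (\<Sum>C\<in>?T. card (?P (C - {x})))"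
  proof (rule card_UN_disjoint[OF fT])
    show "\<forall>C\<in>?T. finite (?P (C - {x}))"
    proof
      fix C assume "C \<in> ?T"
      hence "finite C" using b(3) b(1) finite_subset by blast
      hence "finite (Pow (C - {x}))" by simp
      thus "finite (?P (C - {x}))" by (rule finite_subset[rotated]) auto
    qed
    show "\<forall>C1\<in>?T. \<forall>C2\<in>?T. C1 \<noteq> C2 \<longrightarrow> ?P (C1 - {x}) \<inter> ?P (C2 - {x}) = {}"
    proof (intro ballI impI)
      fix C1 C2 assume c: "C1 \<in> ?T" "C2 \<in> ?T" "C1 \<noteq> C2"
      show "?P (C1 - {x}) \<inter> ?P (C2 - {x}) = {}"
      proof (rule ccontr)
        assume "?P (C1 - {x}) \<inter> ?P (C2 - {x}) \<noteq> {}"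
        then obtain S where s: "S \<subseteq> C1 - {x}" "S \<subseteq> C2 - {x}" "card S = 2" by auto
        have fS: "finite S" using s by (auto intro: card_ge_0_finite)
        have xS: "x \<notin> S" using s by auto
        have "C1 \<subseteq> X" using c b(3) by blast
        hence "insert x S \<subseteq> X" "card (insert x S) = 3" using s x fS xS by auto
        moreover have "insert x S \<subseteq> C1" "insert x S \<subseteq> C2" using s c by auto
        ultimately have "C1 = C2" using sqs_uniq[OF S] c by blast
        thus False using c by simp
      qed
    qed
  qed
  also have "\<dots> = (\<Sum>C\<in>?T. 3)"
  proof (rule sum.cong[OF refl])
    fix C assume c: "C \<in> ?T"
    have cc: "C \<subseteq> X" "card C = 4" using c b(3) by auto
    have "finite C" "card C = 4" using cc b(1) finite_subset by auto
    hence "card (C - {x}) = 3" using c by simp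
    thus "card (?P (C - {x})) = 3" using n_subsets[of "C - {x}" 2] \<open>finite C\<close> by (simp add: numeral_3_eq_3 numeral_2_eq_2)
  qed
  finally have "card (?P (X - {x})) = 3 * card ?T" using eq by simp
  moreover have "card (X - {x}) = v - 1" using x b(1,2) by simp
  moreover have "card (?P (X - {x})) = card (X - {x}) choose 2"
    using n_subsets[of "X - {x}" 2] b(1) by blast
  ultimately show ?thesis by (simp only:)
qed



lemma un2:
  assumes "finite A" "finite B" "card A = n1" "card B = n1" "card (A \<inter> B) = n2"
  shows "card (A \<union> B) + n2 = 2 * n1"
  using card_Un_Int[OF assms(1,2)] assms by simp

lemma un3:
  assumes f: "finite A" "finite B" "finite C" and c: "card A = n1" "card B = n1" "card C = n1"
    and i: "card (A \<inter> B) = n2" "card (A \<inter> C) = n2" "card (B \<inter> C) = n2"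
    and e: "A \<inter> B \<inter> C = {}"
  shows "card (A \<union> B \<union> C) + 3 * n2 = 3 * n1"
proof -
  have 1: "card (A \<union> B) + n2 = 2 * n1" using un2[OF f(1,2) c(1,2) i(1)] .
  have "(A \<union> B) \<inter> C = (A \<inter> C) \<union> (B \<inter> C)" by blast
  moreover have "card ((A \<inter> C) \<union> (B \<inter> C)) = 2 * n2"
  proof -
    have "(A \<inter> C) \<inter> (B \<inter> C) = {}" using e by blast
    thus ?thesis using card_Un_disjoint[of "A \<inter> C" "B \<inter> C"] f i by simp
  qed
  ultimately have 2: "card ((A \<union> B) \<inter> C) = 2 * n2" by simp
  have "card (A \<union> B) + card C = card (A \<union> B \<union> C) + card ((A \<union> B) \<inter> C)"
    using card_Un_Int[of "A \<union> B" C] f by simp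
  thus ?thesis using 1 2 c by simp
qed

lemma un4:
  assumes f: "finite A" "finite B" "finite C" "finite D" and c: "card A = n1" "card B = n1" "card C = n1" "card D = n1"
    and i: "card (A \<inter> B) = n2" "card (A \<inter> C) = n2" "card (B \<inter> C) = n2"
      "card (A \<inter> D) = n2" "card (B \<inter> D) = n2" "card (C \<inter> D) = n2"
    and e: "A \<inter> B \<inter> C = {}" "A \<inter> B \<inter> D = {}" "A \<inter> C \<inter> D = {}" "B \<inter> C \<inter> D = {}"
  shows "card (A \<union> B \<union> C \<union> D) + 6 * n2 = 4 * n1"
proof -
  have 1: "card (A \<union> B \<union> C) + 3 * n2 = 3 * n1" using un3[OF f(1-3) c(1-3) i(1-3) e(1)] .
  have "(A \<union> B \<union> C) \<inter> D = ((A \<inter> D) \<union> (B \<inter> D)) \<union> (C \<inter> D)" by blast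
  moreover have "card ((A \<inter> D) \<union> (B \<inter> D)) = 2 * n2"
  proof -
    have "(A \<inter> D) \<inter> (B \<inter> D) = {}" using e by blast
    thus ?thesis using card_Un_disjoint[of "A \<inter> D" "B \<inter> D"] f i by simp
  qed
  moreover have "card (((A \<inter> D) \<union> (B \<inter> D)) \<union> (C \<inter> D)) = card ((A \<inter> D) \<union> (B \<inter> D)) + card (C \<inter> D)"
    using e f by (intro card_Un_disjoint) auto
  ultimately have 2: "card ((A \<union> B \<union> C) \<inter> D) = 3 * n2" using i by simp
  have "card (A \<union> B \<union> C) + card D = card (A \<union> B \<union> C \<union> D) + card ((A \<union> B \<union> C) \<inter> D)"
    using card_Un_Int[of "A \<union> B \<union> C" D] f by simp
  thus ?thesis using 1 2 c by simp
qed



definition ind :: "'b set \<Rightarrow> 'b set \<Rightarrow> real" where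
  "ind A E = (if A \<inter> E = {} then 1 else 0)"

lemma ind_Un: "ind A (E \<union> F) = ind A E * ind A F"
  unfolding ind_def by (simp add: Int_Un_distrib)

lemma poly4: "(1 - a) * (1 - b) * (1 - c) * (1 - d) =
  1 - a - b - c - d + a*b + a*c + a*d + b*c + b*d + c*d - a*b*c - a*b*d - a*c*d - b*c*d + a*b*c*(d::real)"
  by algebra

lemma ifmult: "(if P then 1 else 0 :: real) * (if Q then 1 else 0) = (if P \<and> Q then 1 else 0)"
  by simp

lemma one_minus_ind: "1 - ind A E = (if A \<inter> E \<noteq> {} then 1 else 0)"
  unfolding ind_def by simp

lemma expand4:
  fixes A :: "'b set"
  shows "(if A \<inter> Ea \<noteq> {} \<and> A \<inter> Eb \<noteq> {} \<and> A \<inter> Ec \<noteq> {} \<and> A \<inter> Ed \<noteq> {} then 1 else 0 :: real)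
   = 1 - ind A Ea - ind A Eb - ind A Ec - ind A Ed
       + ind A (Ea \<union> Eb) + ind A (Ea \<union> Ec) + ind A (Ea \<union> Ed) + ind A (Eb \<union> Ec)
       + ind A (Eb \<union> Ed) + ind A (Ec \<union> Ed)
       - ind A (Ea \<union> Eb \<union> Ec) - ind A (Ea \<union> Eb \<union> Ed)
       - ind A (Ea \<union> Ec \<union> Ed) - ind A (Eb \<union> Ec \<union> Ed)
       + ind A (Ea \<union> Eb \<union> Ec \<union> Ed)"
proof -
  have "(if A \<inter> Ea \<noteq> {} \<and> A \<inter> Eb \<noteq> {} \<and> A \<inter> Ec \<noteq> {} \<and> A \<inter> Ed \<noteq> {} then 1 else 0 :: real)
     = (1 - ind A Ea) * (1 - ind A Eb) * (1 - ind A Ec) * (1 - ind A Ed)"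
    unfolding one_minus_ind ifmult by (simp only: conj_assoc)
  thus ?thesis unfolding ind_Un poly4 by (simp only: mult.assoc)
qed


lemma key2:
  fixes p :: real
  assumes "finite D" "E \<subseteq> D"
  shows "(\<Sum>A\<in>Pow D. p ^ card A * (1-p) ^ card (D-A) * ind A E) = (1-p) ^ card E"
  using key1[OF assms, of p] unfolding ind_def .

lemma card4_obtain:
  assumes "card (B::'a set) = 4"
  obtains a b c d where "B = {a,b,c,d}" "a \<noteq> b" "a \<noteq> c" "a \<noteq> d" "b \<noteq> c" "b \<noteq> d" "c \<noteq> d"
proof -
  have "card B = Suc 3" using assms by simp
  then obtain a B' where "B = insert a B'" "a \<notin> B'" "card B' = 3"
    unfolding card_Suc_eq by blast
  moreover then obtain b c d where "B' = {b,c,d}" "b \<noteq> c" "c \<noteq> d" "b \<noteq> d"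
    unfolding card_3_iff by blast
  ultimately show ?thesis using that by blast
qed

theorem mainTheorem9:
  fixes v :: nat and X :: "'a set" and Bs :: "'a set set" and B :: "'a set"
    and p q :: real and r1 r2 :: nat
  assumes "SQS v X Bs"
    and "B \<in> Bs"
    and "0 \<le> p" and "p \<le> 1"
    and "q = 1 - p"
    and "r1 = ((v - 1) choose 2) div 3"
    and "r2 = ((v - 2) choose 1) div 2"
  shows "reliability Bs B p =
           1 - 4 * q ^ (r1 - 1) + 6 * q ^ (2 * r1 - r2 - 1)
             - 4 * q ^ (3 * r1 - 3 * r2) + q ^ (4 * r1 + 2 - 6 * r2)"
proof -
  note b = sqs_basic[OF assms(1)]
  define D where "D = Bs - {B}"
  have fD: "finite D" using b(5) D_def by simp
  have BX: "B \<subseteq> X" "card B = 4" using b(3) assms(2) by auto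
  obtain a bb c d where B: "B = {a,bb,c,d}" and dist: "a \<noteq> bb" "a \<noteq> c" "a \<noteq> d" "bb \<noteq> c" "bb \<noteq> d" "c \<noteq> d"
    using card4_obtain[OF BX(2)] by blast
  define E where "E x = {C\<in>D. x \<in> C}" for x
  have ED: "E x \<subseteq> D" for x unfolding E_def by blast
  have fE: "finite (E x)" for x using ED fD finite_subset by blast
  have T1: "card (E x) = r1 - 1" "r1 \<ge> 1" if x: "x \<in> B" for x
  proof -
    have xX: "x \<in> X" using x BX by blast
    have fT: "finite {C\<in>Bs. x \<in> C}" using b(5) by simp
    have BT: "B \<in> {C\<in>Bs. x \<in> C}" using x assms(2) by simp
    have "card {C\<in>Bs. x \<in> C} = r1" using r1_count[OF assms(1) xX] assms(6) by simp
    moreover have "E x = {C\<in>Bs. x \<in> C} - {B}" unfolding E_def D_def by blast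
    moreover have "card {C\<in>Bs. x \<in> C} \<ge> 1" using fT BT
      by (metis One_nat_def Suc_leI card_gt_0_iff empty_iff)
    ultimately show "card (E x) = r1 - 1" "r1 \<ge> 1" using card_Diff_singleton[OF BT] by auto
  qed
  have T2: "card (E x \<inter> E y) = r2 - 1" "r2 \<ge> 1" if x: "x \<in> B" "y \<in> B" "x \<noteq> y" for x y
  proof -
    have xX: "x \<in> X" "y \<in> X" using x BX by auto
    have fT: "finite {C\<in>Bs. x \<in> C \<and> y \<in> C}" using b(5) by simp
    have BT: "B \<in> {C\<in>Bs. x \<in> C \<and> y \<in> C}" using x assms(2) by simp
    have "card {C\<in>Bs. x \<in> C \<and> y \<in> C} = r2" using r2_count[OF assms(1) xX x(3)] assms(7) by simp
    moreover have "E x \<inter> E y = {C\<in>Bs. x \<in> C \<and> y \<in> C} - {B}" unfolding E_def D_def by blast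
    moreover have "card {C\<in>Bs. x \<in> C \<and> y \<in> C} \<ge> 1" using fT BT
      by (metis One_nat_def Suc_leI card_gt_0_iff empty_iff)
    ultimately show "card (E x \<inter> E y) = r2 - 1" "r2 \<ge> 1" using card_Diff_singleton[OF BT] by auto
  qed
  have T3: "E x \<inter> E y \<inter> E z = {}" if x: "x \<in> B" "y \<in> B" "z \<in> B" "x \<noteq> y" "x \<noteq> z" "y \<noteq> z" for x y z
  proof (rule ccontr)
    assume "E x \<inter> E y \<inter> E z \<noteq> {}"
    then obtain C where C: "C \<in> Bs" "C \<noteq> B" "{x,y,z} \<subseteq> C" unfolding E_def D_def by auto
    have "{x,y,z} \<subseteq> X" "card {x,y,z} = 3" using x BX by auto
    moreover have "{x,y,z} \<subseteq> B" using x by auto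
    ultimately have "C = B" using sqs_uniq[OF assms(1), of "{x,y,z}" C B] C assms(2) by blast
    thus False using C by simp
  qed
  have inB: "a \<in> B" "bb \<in> B" "c \<in> B" "d \<in> B" using B by auto
  note c1 = T1(1)[OF inB(1)] T1(1)[OF inB(2)] T1(1)[OF inB(3)] T1(1)[OF inB(4)]
  have r1p: "r1 \<ge> 1" using T1(2)[OF inB(1)] .
  have r2p: "r2 \<ge> 1" using T2(2)[OF inB(1) inB(2) dist(1)] .
  have dist': "bb \<noteq> a" "c \<noteq> a" "d \<noteq> a" "c \<noteq> bb" "d \<noteq> bb" "d \<noteq> c" using dist by auto
  note c2 = T2(1)[OF inB(1) inB(2) dist(1)] T2(1)[OF inB(1) inB(3) dist(2)] T2(1)[OF inB(1) inB(4) dist(3)]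
     T2(1)[OF inB(2) inB(3) dist(4)] T2(1)[OF inB(2) inB(4) dist(5)] T2(1)[OF inB(3) inB(4) dist(6)]
  note c3 = T3[OF inB(1) inB(2) inB(3) dist(1,2,4)] T3[OF inB(1) inB(2) inB(4) dist(1,3,5)]
     T3[OF inB(1) inB(3) inB(4) dist(2,3,6)] T3[OF inB(2) inB(3) inB(4) dist(4,5,6)]
  have u2: "card (E x \<union> E y) = 2 * r1 - r2 - 1" if "x \<in> B" "y \<in> B" "x \<noteq> y" for x y
    using un2[OF fE fE T1(1)[OF that(1)] T1(1)[OF that(2)] T2(1)[OF that]] T1(2)[OF that(1)] T2(2)[OF that]
    by linarith
  have u3: "card (E x \<union> E y \<union> E z) = 3 * r1 - 3 * r2" if x: "x \<in> B" "y \<in> B" "z \<in> B" "x \<noteq> y" "x \<noteq> z" "y \<noteq> z" for x y z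
    using un3[OF fE fE fE T1(1)[OF x(1)] T1(1)[OF x(2)] T1(1)[OF x(3)]
        T2(1)[OF x(1,2,4)] T2(1)[OF x(1,3,5)] T2(1)[OF x(2,3,6)] T3[OF x]] r1p r2p
    by linarith
  have u4: "card (E a \<union> E bb \<union> E c \<union> E d) = 4 * r1 + 2 - 6 * r2"
    using un4[OF fE fE fE fE c1 c2(1,2,4,3,5,6) c3] r1p r2p by linarith
  have cond: "(\<exists>P. P \<subseteq> A \<and> repair_set Bs B P) \<longleftrightarrow>
     (A \<inter> E a \<noteq> {} \<and> A \<inter> E bb \<noteq> {} \<and> A \<inter> E c \<noteq> {} \<and> A \<inter> E d \<noteq> {})" if A: "A \<subseteq> D" for A
  proof -
    have "(\<exists>P. P \<subseteq> A \<and> repair_set Bs B P) \<longleftrightarrow> B \<subseteq> \<Union>A"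
      unfolding repair_set_def using A D_def by blast
    also have "\<dots> \<longleftrightarrow> (A \<inter> E a \<noteq> {} \<and> A \<inter> E bb \<noteq> {} \<and> A \<inter> E c \<noteq> {} \<and> A \<inter> E d \<noteq> {})"
      unfolding B E_def using A by blast
    finally show ?thesis .
  qed
  define w where "w A = p ^ card A * (1-p) ^ card (D-A)" for A
  have "reliability Bs B p = (\<Sum>A\<in>Pow D. w A *
      (if A \<inter> E a \<noteq> {} \<and> A \<inter> E bb \<noteq> {} \<and> A \<inter> E c \<noteq> {} \<and> A \<inter> E d \<noteq> {} then 1 else 0))"
    unfolding reliability_def D_def[symmetric] w_def
    by (rule sum.cong[OF refl]) (simp add: cond)
  also have "\<dots> = (\<Sum>A\<in>Pow D. w A * (1 - ind A (E a) - ind A (E bb) - ind A (E c) - ind A (E d)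
       + ind A (E a \<union> E bb) + ind A (E a \<union> E c) + ind A (E a \<union> E d) + ind A (E bb \<union> E c)
       + ind A (E bb \<union> E d) + ind A (E c \<union> E d)
       - ind A (E a \<union> E bb \<union> E c) - ind A (E a \<union> E bb \<union> E d)
       - ind A (E a \<union> E c \<union> E d) - ind A (E bb \<union> E c \<union> E d)
       + ind A (E a \<union> E bb \<union> E c \<union> E d)))"
    by (simp only: expand4)
  also have "\<dots> = (\<Sum>A\<in>Pow D. w A) - (\<Sum>A\<in>Pow D. w A * ind A (E a)) - (\<Sum>A\<in>Pow D. w A * ind A (E bb))
       - (\<Sum>A\<in>Pow D. w A * ind A (E c)) - (\<Sum>A\<in>Pow D. w A * ind A (E d))
       + (\<Sum>A\<in>Pow D. w A * ind A (E a \<union> E bb)) + (\<Sum>A\<in>Pow D. w A * ind A (E a \<union> E c))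
       + (\<Sum>A\<in>Pow D. w A * ind A (E a \<union> E d)) + (\<Sum>A\<in>Pow D. w A * ind A (E bb \<union> E c))
       + (\<Sum>A\<in>Pow D. w A * ind A (E bb \<union> E d)) + (\<Sum>A\<in>Pow D. w A * ind A (E c \<union> E d))
       - (\<Sum>A\<in>Pow D. w A * ind A (E a \<union> E bb \<union> E c)) - (\<Sum>A\<in>Pow D. w A * ind A (E a \<union> E bb \<union> E d))
       - (\<Sum>A\<in>Pow D. w A * ind A (E a \<union> E c \<union> E d)) - (\<Sum>A\<in>Pow D. w A * ind A (E bb \<union> E c \<union> E d))
       + (\<Sum>A\<in>Pow D. w A * ind A (E a \<union> E bb \<union> E c \<union> E d))"
    by (simp only: right_diff_distrib distrib_left mult_1_right sum.distrib sum_subtractf)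
  also have "\<dots> = 1 - q ^ (r1 - 1) - q ^ (r1 - 1) - q ^ (r1 - 1) - q ^ (r1 - 1)
     + q ^ (2 * r1 - r2 - 1) + q ^ (2 * r1 - r2 - 1) + q ^ (2 * r1 - r2 - 1)
     + q ^ (2 * r1 - r2 - 1) + q ^ (2 * r1 - r2 - 1) + q ^ (2 * r1 - r2 - 1)
     - q ^ (3 * r1 - 3 * r2) - q ^ (3 * r1 - 3 * r2) - q ^ (3 * r1 - 3 * r2) - q ^ (3 * r1 - 3 * r2)
     + q ^ (4 * r1 + 2 - 6 * r2)"
  proof -
    have K: "(\<Sum>A\<in>Pow D. w A * ind A F) = q ^ card F" if "F \<subseteq> D" for F
      using key2[OF fD that, of p] unfolding w_def assms(5) .
    have K0: "(\<Sum>A\<in>Pow D. w A) = 1"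
      using K[of "{}"] by (simp add: ind_def)
    have EU: "E x \<union> E y \<subseteq> D" "E x \<union> E y \<union> E z \<subseteq> D" "E x \<union> E y \<union> E z \<union> E u \<subseteq> D" for x y z u
      using ED by auto
    show ?thesis
      unfolding K0 K[OF ED] K[OF EU(1)] K[OF EU(2)] K[OF EU(3)]
      unfolding c1 u2[OF inB(1,2) dist(1)] u2[OF inB(1,3) dist(2)] u2[OF inB(1,4) dist(3)]
        u2[OF inB(2,3) dist(4)] u2[OF inB(2,4) dist(5)] u2[OF inB(3,4) dist(6)]
        u3[OF inB(1,2,3) dist(1,2,4)] u3[OF inB(1,2,4) dist(1,3,5)]
        u3[OF inB(1,3,4) dist(2,3,6)] u3[OF inB(2,3,4) dist(4,5,6)] u4
      by (rule refl)
  qed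
  also have "\<dots> = 1 - 4 * q ^ (r1 - 1) + 6 * q ^ (2 * r1 - r2 - 1)
             - 4 * q ^ (3 * r1 - 3 * r2) + q ^ (4 * r1 + 2 - 6 * r2)" by simp
  finally show ?thesis .
qed

end
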